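(* Let $n\ge1$, $k\ge2$ and $B\in\mathrm{GL}_n(\mathbb{R})$. There exists a $C^2_{loc}$-neighborhood $\mathcal{U}$ of $P_B$ in $\mathrm{Hom}(\Gamma_{n,k},\mathcal{D}(\mathbb{R}^n,0))$ such that $D^{(1)}_0P^a = k^{-1}I$ for all $P\in\mathcal{U}$.
   Context: $\Gamma_{n,k} = \langle a, b_1,\dots,b_n \mid a b_i a^{-1} = b_i^k,\ b_i b_j = b_j b_i\rangle$. Elements of $\mathrm{GL}_n(\mathbb{R})$ are identified with bases $B=(v_1,\dots,v_n)$ of $\mathbb{R}^n$. On $S^n=\mathbb{R}^n\cup\{\infty\}$, $\rho_B^a(x)=kx$, $\rho_B^{b_i}(x)=x+v_i$, fixing $\infty$. $\mathcal{D}(\mathbb{R}^n,0)$ is the group of germs at $0$ of local diffeomorphisms of $\mathbb{R}^n$ fixing $0$; $D^{(r)}_0F$ is the $r$-th derivative at $0$ (a symmetric $r$-linear map) with norm $\|F\|^{(r)}=\sup\{\|F(\xi_1,\dots,\xi_r)\|:\|\xi_i\|\le1\}$. The $C^2_{loc}$-topology is given by the pseudo-distance $d(F,G)=\sum_{i=1}^2\|D^{(i)}_0F-D^{(i)}_0G\|^{(i)}$, with the induced product topology on local actions $\mathrm{Hom}(\Gamma_{n,k},\mathcal{D}(\mathbb{R}^n,0))$. $\bar\phi(x)=x/\|x\|^2$ maps $S^n\setminus\{0\}$ to $\mathbb{R}^n$ with $\bar\phi(\infty)=0$, and $P_B^\gamma=\bar\phi\circ\rho_B^\gamma\circ\bar\phi^{-1}$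 as germs at $0$. *)

theory Defs
  imports "HOL-Analysis.Analysis"
begin

definition ddir :: "'a::euclidean_space \<Rightarrow> ('a \<Rightarrow> 'b::real_normed_vector) \<Rightarrow> 'a \<Rightarrow> 'b" where
  "ddir v f = (\<lambda>x. frechet_derivative f (at x) v)"

definition smooth_on :: "'a::euclidean_space set \<Rightarrow> ('a \<Rightarrow> 'b::real_normed_vector) \<Rightarrow> bool" where
  "smooth_on U f \<longleftrightarrow> (\<forall>vs. (fold ddir vs f) differentiable_on U)"

text \<open>A function representing an element of D(R^n,0): a germ at 0 of a local
  (C-infinity) diffeomorphism fixing 0.\<close>
definition local_diffeo0 :: "('a::euclidean_space \<Rightarrow> 'a) \<Rightarrow> bool" where
  "local_diffeo0 F \<longleftrightarrow> F 0 = 0 \<and>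
     (\<exists>U. open U \<and> 0 \<in> U \<and> smooth_on U F \<and> inj_on F U \<and> open (F ` U)
          \<and> smooth_on (F ` U) (the_inv_into U F))"

definition germ_eq :: "('a::topological_space \<Rightarrow> 'b) \<Rightarrow> ('a \<Rightarrow> 'b) \<Rightarrow> 'a \<Rightarrow> bool" where
  "germ_eq F G p \<longleftrightarrow> (\<forall>\<^sub>F x in nhds p. F x = G x)"

text \<open>A homomorphism Gamma_{n,k} -> D(R^n,0), given by the images A of a and
  Bs i of b_i, satisfying the defining relations as germs at 0:
  a b_i a^{-1} = b_i^k (equivalently, a b_i = b_i^k a) and b_i b_j = b_j b_i.\<close>
definition local_action ::
  "nat \<Rightarrow> (real^'n::finite \<Rightarrow> real^'n) \<Rightarrow> ('n \<Rightarrow> real^'n \<Rightarrow> real^'n) \<Rightarrow> bool" where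
  "local_action k A Bs \<longleftrightarrow> local_diffeo0 A \<and> (\<forall>i. local_diffeo0 (Bs i)) \<and>
     (\<forall>i. germ_eq (A \<circ> Bs i) ((Bs i ^^ k) \<circ> A) 0) \<and>
     (\<forall>i j. germ_eq (Bs i \<circ> Bs j) (Bs j \<circ> Bs i) 0)"

definition D1 :: "('a::euclidean_space \<Rightarrow> 'a) \<Rightarrow> 'a \<Rightarrow>\<^sub>L 'a" where
  "D1 F = Blinfun (frechet_derivative F (at 0))"

definition D2 :: "('a::euclidean_space \<Rightarrow> 'a) \<Rightarrow> 'a \<Rightarrow>\<^sub>L ('a \<Rightarrow>\<^sub>L 'a)" where
  "D2 F = Blinfun (frechet_derivative (\<lambda>x. Blinfun (frechet_derivative F (at x))) (at 0))"

definition dC2 :: "('a::euclidean_space \<Rightarrow> 'a) \<Rightarrow> ('a \<Rightarrow> 'a) \<Rightarrow> real" where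
  "dC2 F G = norm (D1 F - D1 G) + norm (D2 F - D2 G)"

text \<open>S^n = R^n plus a point at infinity, modelled as an option type (None = infinity).\<close>
type_synonym 'n sphere_pt = "(real^'n::finite) option"

definition rho_a :: "nat \<Rightarrow> ('n::finite) sphere_pt \<Rightarrow> 'n sphere_pt" where
  "rho_a k p = (case p of None \<Rightarrow> None | Some x \<Rightarrow> Some (real k *\<^sub>R x))"

definition rho_b :: "real^'n::finite^'n \<Rightarrow> 'n \<Rightarrow> 'n sphere_pt \<Rightarrow> 'n sphere_pt" where
  "rho_b B i p = (case p of None \<Rightarrow> None | Some x \<Rightarrow> Some (x + column i B))"

definition phibar :: "('n::finite) sphere_pt \<Rightarrow> real^'n" where
  "phibar p = (case p of None \<Rightarrow> 0 | Some x \<Rightarrow> (1 / (norm x)\<^sup>2) *\<^sub>R x)"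

definition phibar_inv :: "real^'n::finite \<Rightarrow> 'n sphere_pt" where
  "phibar_inv y = (if y = 0 then None else Some ((1 / (norm y)\<^sup>2) *\<^sub>R y))"

definition P_a :: "nat \<Rightarrow> real^'n::finite \<Rightarrow> real^'n" where
  "P_a k = phibar \<circ> rho_a k \<circ> phibar_inv"

definition P_b :: "real^'n::finite^'n \<Rightarrow> 'n \<Rightarrow> real^'n \<Rightarrow> real^'n" where
  "P_b B i = phibar \<circ> rho_b B i \<circ> phibar_inv"

end

theory Submission
  imports Defs
begin


definition jet :: "('a::real_normed_vector \<Rightarrow> 'a) \<Rightarrow> ('a \<Rightarrow> 'a) \<Rightarrow> ('a \<Rightarrow> 'a) \<Rightarrow> bool" where
  "jet F L q \<longleftrightarrow> (\<forall>e>0. \<exists>d>0. \<forall>x. norm x < d \<longrightarrow> norm (F x - L x - q x) \<le> e * (norm x)^2)"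

lemma taylor_jet:
  fixes F :: "'a::euclidean_space \<Rightarrow> 'a"
  assumes U: "open U" "0 \<in> U" and F0: "F 0 = 0"
    and dU: "\<forall>x\<in>U. F differentiable (at x)"
    and dG: "\<forall>e. (\<lambda>x. frechet_derivative F (at x) e) differentiable (at 0)"
  shows "jet F (blinfun_apply (D1 F)) (\<lambda>y. (1/2) *\<^sub>R blinfun_apply (blinfun_apply (D2 F) y) y)"
proof -
  define F' where "F' x = frechet_derivative F (at x)" for x
  have Fd: "(F has_derivative F' x) (at x)" if "x \<in> U" for x
    unfolding F'_def using dU that frechet_derivative_works by blast
  have Fbl: "bounded_linear (F' x)" if "x \<in> U" for x
    using Fd[OF that] has_derivative_bounded_linear by blast
  obtain g' where g': "\<And>e. ((\<lambda>x. F' x e) has_derivative g' e) (at 0)"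
    using dG unfolding F'_def differentiable_def by metis
  define \<Phi> where "\<Phi> e w = blinfun_scaleR_left w o\<^sub>L blinfun_inner_left e" for e :: 'a and w :: 'a
  have \<Phi>bl: "bounded_linear (\<Phi> e)" for e
    unfolding \<Phi>_def
    by (intro bounded_linear_compose[OF bounded_bilinear.bounded_linear_left[OF bounded_bilinear_blinfun_compose]] bounded_linear_blinfun_scaleR_left)
  define H where "H x = (\<Sum>e\<in>Basis. \<Phi> e (F' x e))" for x
  define H' where "H' h = (\<Sum>e\<in>Basis. \<Phi> e (g' e h))" for h
  have Hd: "(H has_derivative H') (at 0)"
    unfolding H_def H'_def
    by (intro has_derivative_sum bounded_linear.has_derivative[OF \<Phi>bl] g')
  have GH: "Blinfun (F' x) = H x" if "x \<in> U" for x
  proof (rule blinfun_eqI)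
    fix h
    have "F' x h = F' x (\<Sum>e\<in>Basis. (h \<bullet> e) *\<^sub>R e)" by (simp add: euclidean_representation)
    also have "\<dots> = (\<Sum>e\<in>Basis. (h \<bullet> e) *\<^sub>R F' x e)"
      using Fbl[OF that] by (simp add: linear_sum linear_scale bounded_linear.linear)
    finally show "blinfun_apply (Blinfun (F' x)) h = blinfun_apply (H x) h"
      using Fbl[OF that] by (simp add: bounded_linear_Blinfun_apply H_def \<Phi>_def blinfun.sum_left)
  qed
  have Gd: "((\<lambda>x. Blinfun (F' x)) has_derivative H') (at 0)"
    using has_derivative_transform_within_open[OF Hd U] GH by metis
  have H'bl: "bounded_linear H'" using Hd has_derivative_bounded_linear by blast
  have D2: "blinfun_apply (D2 F) = H'"
    unfolding D2_def F'_def[symmetric] using frechet_derivative_at[OF Gd] H'bl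
    by (metis bounded_linear_Blinfun_apply)
  have D1: "blinfun_apply (D1 F) = F' 0"
    unfolding D1_def F'_def[symmetric] using Fbl[OF U(2)] by (simp add: bounded_linear_Blinfun_apply)
  show ?thesis unfolding jet_def D1 D2
  proof (intro allI impI)
    fix e :: real assume e: "e > 0"
    obtain d1 where d1: "d1 > 0" "\<And>z. norm z < d1 \<Longrightarrow> norm (Blinfun (F' z) - Blinfun (F' 0) - H' z) \<le> e * norm z"
      using Gd e unfolding has_derivative_at_alt by (metis diff_zero)
    obtain d2 where d2: "d2 > 0" "ball 0 d2 \<subseteq> U" using U openE by blast
    show "\<exists>d>0. \<forall>y. norm y < d \<longrightarrow> norm (F y - F' 0 y - (1/2) *\<^sub>R H' y y) \<le> e * (norm y)^2"
    proof (intro exI[of _ "min d1 d2"] conjI allI impI)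
      show "min d1 d2 > 0" using d1 d2 by simp
      fix y :: 'a assume y: "norm y < min d1 d2"
      have tyU: "t *\<^sub>R y \<in> U" if "t \<in> {0..1}" for t
      proof -
        have "norm (t *\<^sub>R y) \<le> norm y" using that by (auto intro: mult_left_le_one_le)
        then show ?thesis using y d2 by (auto simp: dist_norm)
      qed
      define f where "f t = F (t *\<^sub>R y) - (t^2/2) *\<^sub>R H' y y" for t
      define f' where "f' t = F' (t *\<^sub>R y) y - t *\<^sub>R H' y y" for t
      have fd: "(f has_vector_derivative f' t) (at t within {0..1})" if "t \<in> {0..1}" for t
      proof -
        have blt: "bounded_linear (F' (t *\<^sub>R y))" using Fbl tyU that by blast
        have 0: "((\<lambda>t. t *\<^sub>R y) has_derivative (\<lambda>s. s *\<^sub>R y)) (at t within {0..1})"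
          by (rule has_derivative_scaleR_left[OF has_derivative_ident])
        have 1: "((\<lambda>t. F (t *\<^sub>R y)) has_derivative (\<lambda>s. F' (t *\<^sub>R y) (s *\<^sub>R y))) (at t within {0..1})"
          using has_derivative_compose[OF 0 Fd[OF tyU[OF that]]] .
        have 2: "((\<lambda>t. (t^2/2) *\<^sub>R H' y y) has_derivative (\<lambda>s. (s * t) *\<^sub>R H' y y)) (at t within {0..1})"
          by (auto intro!: derivative_eq_intros)
        have "(f has_derivative (\<lambda>s. F' (t *\<^sub>R y) (s *\<^sub>R y) - (s * t) *\<^sub>R H' y y)) (at t within {0..1})"
          unfolding f_def by (rule has_derivative_diff[OF 1 2])
        moreover have "(\<lambda>s. F' (t *\<^sub>R y) (s *\<^sub>R y) - (s * t) *\<^sub>R H' y y) = (\<lambda>s. s *\<^sub>R f' t)"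
          using linear.scaleR[OF bounded_linear.linear[OF blt]] by (auto simp: f'_def algebra_simps)
        ultimately show ?thesis unfolding has_vector_derivative_def by simp
      qed
      have bd: "norm (f' t - f' 0) \<le> e * (norm y)^2" if "t \<in> {0..1}" for t
      proof -
        have blt: "bounded_linear (F' (t *\<^sub>R y))" using Fbl tyU that by blast
        have bl0: "bounded_linear (F' 0)" using Fbl U by blast
        have ty: "norm (t *\<^sub>R y) \<le> norm y" using that by (auto intro: mult_left_le_one_le)
        have "f' t - f' 0 = blinfun_apply (Blinfun (F' (t *\<^sub>R y)) - Blinfun (F' 0) - H' (t *\<^sub>R y)) y"
          using blt bl0 H'bl
          by (simp add: f'_def bounded_linear_Blinfun_apply blinfun.diff_left linear.scaleR[OF bounded_linear.linear[OF H'bl]] blinfun.scaleR_left)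
        also have "norm \<dots> \<le> norm (Blinfun (F' (t *\<^sub>R y)) - Blinfun (F' 0) - H' (t *\<^sub>R y)) * norm y"
          by (rule norm_blinfun)
        also have "\<dots> \<le> (e * norm (t *\<^sub>R y)) * norm y"
          by (intro mult_right_mono d1(2)) (use ty y in auto)
        also have "\<dots> \<le> (e * norm y) * norm y"
          using ty e by (intro mult_right_mono mult_left_mono) auto
        finally show ?thesis by (simp add: power2_eq_square mult.assoc)
      qed
      have "norm (f 1 - f 0 - (1 - 0) *\<^sub>R f' 0) \<le> norm (1 - 0::real) * (e * (norm y)^2)"
        by (rule vector_differentiable_bound_linearization[OF fd _ bd]) (auto simp: closed_segment_eq_real_ivl)
      then show "norm (F y - F' 0 y - (1/2) *\<^sub>R H' y y) \<le> e * (norm y)^2"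
        by (simp add: f_def f'_def F0 algebra_simps)
    qed
  qed
qed



definition quadf :: "('a::real_normed_vector \<Rightarrow> 'a) \<Rightarrow> bool" where
  "quadf q \<longleftrightarrow> (\<exists>T::'a \<Rightarrow>\<^sub>L 'a \<Rightarrow>\<^sub>L 'a. \<forall>x. q x = T x x)"

lemma quadf_bounds:
  assumes "quadf q"
  obtains K where "K > 0" "\<And>x. norm (q x) \<le> K * (norm x)^2"
    "\<And>x y. norm (q (x + y) - q x) \<le> K * (2 * norm x * norm y + (norm y)^2)"
    "\<And>t x. q (t *\<^sub>R x) = t^2 *\<^sub>R q x"
proof -
  obtain T :: "'a \<Rightarrow>\<^sub>L 'a \<Rightarrow>\<^sub>L 'a" where T: "\<And>x. q x = T x x" using assms quadf_def by blast
  have b: "norm (T x y) \<le> norm T * norm x * norm y" for x y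
  proof -
    have "norm (T x y) \<le> norm (T x) * norm y" by (rule norm_blinfun)
    also have "\<dots> \<le> norm T * norm x * norm y" by (intro mult_right_mono norm_blinfun) simp
    finally show ?thesis .
  qed
  have 1: "norm (q x) \<le> (norm T + 1) * (norm x)^2" for x
  proof -
    have "norm (q x) \<le> norm T * (norm x)^2" using b[of x x] by (simp add: T power2_eq_square mult.assoc)
    also have "\<dots> \<le> (norm T + 1) * (norm x)^2" by (intro mult_right_mono) simp_all
    finally show ?thesis .
  qed
  have eq: "q (x + y) - q x = T x y + T y x + T y y" for x y
    by (simp add: T blinfun.add_left blinfun.add_right)
  have 2: "norm (q (x + y) - q x) \<le> (norm T + 1) * (2 * norm x * norm y + (norm y)^2)" for x y
  proof -
    have "norm (q (x + y) - q x) \<le> norm (T x y + T y x) + norm (T y y)"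
      unfolding eq by (rule norm_triangle_ineq)
    also have "\<dots> \<le> norm (T x y) + norm (T y x) + norm (T y y)"
      by (intro add_right_mono norm_triangle_ineq)
    also have "\<dots> \<le> norm T * norm x * norm y + norm T * norm y * norm x + norm T * norm y * norm y"
      using b by (intro add_mono) auto
    also have "\<dots> = norm T * (2 * norm x * norm y + (norm y)^2)" by (simp add: algebra_simps power2_eq_square)
    also have "\<dots> \<le> (norm T + 1) * (2 * norm x * norm y + (norm y)^2)"
      by (intro mult_right_mono) auto
    finally show ?thesis .
  qed
  have 3: "q (t *\<^sub>R x) = t^2 *\<^sub>R q x" for t x
    by (simp add: T blinfun.scaleR_left blinfun.scaleR_right power2_eq_square)
  have pos: "norm T + 1 > 0" by (metis add_nonneg_pos norm_ge_zero zero_less_one)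
  show ?thesis using that[OF pos 1 2 3] .
qed

lemma small_poly:
  fixes a b :: "'a::real_normed_vector"
  assumes H: "\<forall>e>0. \<exists>d>0. \<forall>t. 0 < t \<and> t < d \<longrightarrow> norm (t *\<^sub>R a + t^2 *\<^sub>R b) \<le> e * t^2"
  shows "a = 0 \<and> b = 0"
proof -
  have a: "a = 0"
  proof (rule ccontr)
    assume na: "a \<noteq> 0"
    obtain d where d: "d > 0" "\<And>t. 0 < t \<Longrightarrow> t < d \<Longrightarrow> norm (t *\<^sub>R a + t^2 *\<^sub>R b) \<le> 1 * t^2"
      using H by (meson zero_less_one)
    define t where "t = min (d/2) (norm a / (2 * (norm b + 1)))"
    have pb: "2 * (norm b + 1) > 0" by (intro mult_pos_pos add_nonneg_pos) auto
    have "norm a / (2 * (norm b + 1)) > 0" using na pb by (intro divide_pos_pos) auto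
    then have tpos: "t > 0" using d by (simp add: t_def)
    have "t < d" using d by (simp add: t_def)
    then have 1: "norm (t *\<^sub>R a + t^2 *\<^sub>R b) \<le> t^2" using d tpos by simp
    have "t * norm a = norm (t *\<^sub>R a)" using tpos by simp
    also have "\<dots> \<le> norm (t *\<^sub>R a + t^2 *\<^sub>R b) + norm (t^2 *\<^sub>R b)"
      by (metis add_diff_cancel_right' norm_triangle_ineq4)
    also have "\<dots> \<le> t^2 + t^2 * norm b" using 1 by simp
    finally have "t * norm a \<le> t * (t * (1 + norm b))" by (simp add: power2_eq_square algebra_simps)
    then have "norm a \<le> t * (1 + norm b)" using tpos by simp
    moreover have "t * (1 + norm b) \<le> norm a / 2"
    proof -
      have "t \<le> norm a / (2 * (norm b + 1))" by (simp add: t_def)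
      then have "t * (1 + norm b) \<le> norm a / (2 * (norm b + 1)) * (1 + norm b)"
        by (intro mult_right_mono) auto
      also have "\<dots> = norm a / 2" using pb by (simp add: field_simps)
      finally show ?thesis .
    qed
    ultimately show False using na zero_less_norm_iff[of a] by linarith
  qed
  have "norm b \<le> e" if e: "e > 0" for e
  proof -
    obtain d where d: "d > 0" "\<And>t. 0 < t \<Longrightarrow> t < d \<Longrightarrow> norm (t *\<^sub>R a + t^2 *\<^sub>R b) \<le> e * t^2"
      using H e by meson
    have "norm ((d/2)^2 *\<^sub>R b) \<le> e * (d/2)^2" using d(2)[of "d/2"] d(1) a by simp
    then show ?thesis using d(1) by simp
  qed
  then have "b = 0"
    by (metis dense not_le norm_le_zero_iff)
  with a show ?thesis by simp
qed

lemma jet_unique: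
  assumes J1: "jet F L q" and J2: "jet G L' q'" and E: "\<forall>\<^sub>F x in nhds 0. F x = G x"
    and lin: "linear L" "linear L'"
    and hq: "\<And>t x. q (t *\<^sub>R x) = t^2 *\<^sub>R q x" "\<And>t x. q' (t *\<^sub>R x) = t^2 *\<^sub>R q' x"
  shows "L y = L' y \<and> q y = q' y"
proof -
  obtain d0 where d0: "d0 > 0" "\<And>x. norm x < d0 \<Longrightarrow> F x = G x"
    using E unfolding eventually_nhds_metric by (auto simp: dist_norm)
  have "\<forall>e>0. \<exists>d>0. \<forall>t. 0 < t \<and> t < d \<longrightarrow>
      norm (t *\<^sub>R (L y - L' y) + t^2 *\<^sub>R (q y - q' y)) \<le> e * t^2"
  proof (intro allI impI)
    fix e :: real assume e: "e > 0"
    define e' where "e' = e / (2 * ((norm y)^2 + 1))"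
    have py: "2 * ((norm y)^2 + 1) > 0" by (intro mult_pos_pos add_nonneg_pos) auto
    have e': "e' > 0" unfolding e'_def using e py by (rule divide_pos_pos)
    obtain d1 where d1: "d1 > 0" "\<And>x. norm x < d1 \<Longrightarrow> norm (F x - L x - q x) \<le> e' * (norm x)^2"
      using J1 e' unfolding jet_def by meson
    obtain d2 where d2: "d2 > 0" "\<And>x. norm x < d2 \<Longrightarrow> norm (G x - L' x - q' x) \<le> e' * (norm x)^2"
      using J2 e' unfolding jet_def by meson
    have ny1: "0 < norm y + 1" by (metis add_nonneg_pos norm_ge_zero zero_less_one)
    define d where "d = min d0 (min d1 d2) / (norm y + 1)"
    show "\<exists>d>0. \<forall>t. 0 < t \<and> t < d \<longrightarrow>
      norm (t *\<^sub>R (L y - L' y) + t^2 *\<^sub>R (q y - q' y)) \<le> e * t^2"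
    proof (intro exI[of _ d] conjI allI impI)
      show "d > 0" unfolding d_def using d0 d1 d2 ny1 by (intro divide_pos_pos) simp_all
      fix t :: real assume t: "0 < t \<and> t < d"
      have "norm (t *\<^sub>R y) < min d0 (min d1 d2)"
      proof -
        have "norm (t *\<^sub>R y) = t * norm y" using t by simp
        also have "\<dots> \<le> t * (norm y + 1)" using t by simp
        also have "\<dots> < d * (norm y + 1)" using t ny1 by (intro mult_strict_right_mono) auto
        also have "\<dots> = min d0 (min d1 d2)" unfolding d_def using ny1 by simp
        finally show ?thesis .
      qed
      then have ty: "norm (t *\<^sub>R y) < d0" "norm (t *\<^sub>R y) < d1" "norm (t *\<^sub>R y) < d2" by auto
      have eq: "t *\<^sub>R (L y - L' y) + t^2 *\<^sub>R (q y - q' y)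
          = (G (t *\<^sub>R y) - L' (t *\<^sub>R y) - q' (t *\<^sub>R y)) - (F (t *\<^sub>R y) - L (t *\<^sub>R y) - q (t *\<^sub>R y))"
        using d0(2)[OF ty(1)] linear.scaleR[OF lin(1)] linear.scaleR[OF lin(2)] hq
        by (simp add: algebra_simps)
      have "norm (t *\<^sub>R (L y - L' y) + t^2 *\<^sub>R (q y - q' y)) \<le> e' * (norm (t *\<^sub>R y))^2 + e' * (norm (t *\<^sub>R y))^2"
        unfolding eq using d1(2)[OF ty(2)] d2(2)[OF ty(3)]
        by (metis add.commute add_mono norm_triangle_ineq4 order_trans)
      also have "\<dots> = 2 * e' * (norm y)^2 * t^2" using t by (simp add: power_mult_distrib)
      also have "\<dots> \<le> e * t^2"
      proof -
        have "2 * e' * (norm y)^2 = e * ((norm y)^2 / ((norm y)^2 + 1))"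
          using py by (simp add: e'_def field_simps del: mult_pos_pos)
        also have "\<dots> \<le> e * 1" using e py by (intro mult_left_mono) (auto simp: divide_le_eq)
        finally show ?thesis using t by (intro mult_right_mono) auto
      qed
      finally show "norm (t *\<^sub>R (L y - L' y) + t^2 *\<^sub>R (q y - q' y)) \<le> e * t^2" .
    qed
  qed
  from small_poly[OF this] show ?thesis by simp
qed



lemma jet_compose:
  assumes JF: "jet F L q" and JG: "jet G M r"
    and bL: "bounded_linear L" and bM: "bounded_linear M"
    and qq: "quadf q" and qr: "quadf r"
  shows "jet (\<lambda>x. F (G x)) (\<lambda>x. L (M x)) (\<lambda>x. L (r x) + q (M x))"
  unfolding jet_def
proof (intro allI impI)
  fix e :: real assume e: "e > 0"
  obtain Kq where Kq: "Kq > 0" "\<And>x y. norm (q (x + y) - q x) \<le> Kq * (2 * norm x * norm y + (norm y)^2)"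
    using quadf_bounds[OF qq] by metis
  obtain Kr where Kr: "Kr > 0" "\<And>x. norm (r x) \<le> Kr * (norm x)^2"
    using quadf_bounds[OF qr] by metis
  obtain KL where KL: "KL > 0" "\<And>x. norm (L x) \<le> norm x * KL"
    using bounded_linear.pos_bounded[OF bL] by blast
  obtain KM where KM: "KM > 0" "\<And>x. norm (M x) \<le> norm x * KM"
    using bounded_linear.pos_bounded[OF bM] by blast
  obtain d1 where d1: "d1 > 0" "\<And>x. norm x < d1 \<Longrightarrow> norm (G x - M x - r x) \<le> 1 * (norm x)^2"
    using JG unfolding jet_def by (meson zero_less_one)
  define K1 where "K1 = Kr + 1"
  define K2 where "K2 = KM + K1"
  have K1: "K1 > 0" and K2: "K2 > 0" using Kr KM by (auto simp: K1_def K2_def)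
  have GM: "norm (G x - M x) \<le> K1 * (norm x)^2" if "norm x < d1" for x
  proof -
    have "norm (G x - M x) \<le> norm (G x - M x - r x) + norm (r x)"
      using norm_triangle_ineq[of "G x - M x - r x" "r x"] by simp
    also have "\<dots> \<le> (norm x)^2 + Kr * (norm x)^2" using d1(2)[OF that] Kr(2)[of x] by simp
    finally show ?thesis by (simp add: K1_def algebra_simps)
  qed
  have Gb: "norm (G x) \<le> K2 * norm x" if "norm x < d1" "norm x < 1" for x
  proof -
    have "norm (G x) \<le> norm (M x) + norm (G x - M x)" using norm_triangle_ineq[of "M x" "G x - M x"] by simp
    also have "\<dots> \<le> norm x * KM + K1 * (norm x)^2" using GM[OF that(1)] KM(2)[of x] by simp
    also have "K1 * (norm x)^2 \<le> K1 * norm x"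
      using that K1 by (intro mult_left_mono) (auto simp: power2_eq_square intro: mult_left_le_one_le)
    finally show ?thesis by (simp add: K2_def algebra_simps)
  qed
  define eF where "eF = e / (3 * K2^2)"
  have eF: "eF > 0" using e K2 by (simp add: eF_def)
  obtain dF where dF: "dF > 0" "\<And>y. norm y < dF \<Longrightarrow> norm (F y - L y - q y) \<le> eF * (norm y)^2"
    using JF eF unfolding jet_def by meson
  define eG where "eG = e / (3 * KL)"
  have eG: "eG > 0" using e KL by (simp add: eG_def)
  obtain d2 where d2: "d2 > 0" "\<And>x. norm x < d2 \<Longrightarrow> norm (G x - M x - r x) \<le> eG * (norm x)^2"
    using JG eG unfolding jet_def by meson
  define K3 where "K3 = Kq * (2 * KM * K1 + K1^2)"
  have K3: "K3 > 0" using Kq KM K1 unfolding K3_def by (intro mult_pos_pos add_pos_pos) auto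
  define d where "d = min (min d1 1) (min d2 (min (dF / K2) (e / (3 * K3))))"
  show "\<exists>d>0. \<forall>x. norm x < d \<longrightarrow> norm (F (G x) - L (M x) - (L (r x) + q (M x))) \<le> e * (norm x)^2"
  proof (intro exI[of _ d] conjI allI impI)
    show "d > 0" using d1 d2 dF K2 e K3 by (simp add: d_def)
    fix x :: 'a assume x: "norm x < d"
    have x1: "norm x < d1" "norm x < 1" "norm x < d2" "norm x < dF / K2" "norm x < e / (3 * K3)"
      using x by (auto simp: d_def)
    have GdF: "norm (G x) < dF"
    proof -
      have "norm (G x) \<le> K2 * norm x" by (rule Gb[OF x1(1,2)])
      also have "\<dots> < K2 * (dF / K2)" using K2 x1(4) by (intro mult_strict_left_mono) auto
      finally show ?thesis using K2 by simp
    qed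
    have t1: "norm (F (G x) - L (G x) - q (G x)) \<le> e / 3 * (norm x)^2"
    proof -
      have "norm (F (G x) - L (G x) - q (G x)) \<le> eF * (norm (G x))^2" by (rule dF(2)[OF GdF])
      also have "\<dots> \<le> eF * (K2 * norm x)^2"
        using Gb[OF x1(1,2)] eF by (intro mult_left_mono power_mono) auto
      also have "\<dots> = e / 3 * (norm x)^2" using K2 by (simp add: eF_def power_mult_distrib)
      finally show ?thesis .
    qed
    have t2: "norm (L (G x - M x - r x)) \<le> e / 3 * (norm x)^2"
    proof -
      have "norm (L (G x - M x - r x)) \<le> norm (G x - M x - r x) * KL" by (rule KL(2))
      also have "\<dots> \<le> eG * (norm x)^2 * KL" using d2(2)[OF x1(3)] KL by (intro mult_right_mono) auto
      also have "\<dots> = e / 3 * (norm x)^2" using KL by (simp add: eG_def)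
      finally show ?thesis .
    qed
    have t3: "norm (q (G x) - q (M x)) \<le> e / 3 * (norm x)^2"
    proof -
      define y where "y = G x - M x"
      have Gx: "G x = M x + y" by (simp add: y_def)
      have y: "norm y \<le> K1 * (norm x)^2" unfolding y_def by (rule GM[OF x1(1)])
      have "norm (q (G x) - q (M x)) \<le> Kq * (2 * norm (M x) * norm y + (norm y)^2)"
        unfolding Gx by (rule Kq(2))
      also have "\<dots> \<le> Kq * (2 * (norm x * KM) * (K1 * (norm x)^2) + (K1 * (norm x)^2)^2)"
        using KM(2)[of x] y Kq KM(1) by (intro mult_left_mono add_mono mult_mono power_mono) auto
      also have "\<dots> = K3 * (norm x)^3 + Kq * K1^2 * ((norm x)^4 - (norm x)^3)"
        by (simp add: K3_def algebra_simps power2_eq_square power3_eq_cube power4_eq_xxxx)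
      also have "\<dots> \<le> K3 * (norm x)^3"
      proof -
        have "(norm x)^4 \<le> (norm x)^3"
          using x1(2) by (simp add: power_decreasing)
        then show ?thesis using Kq K1 by (simp add: mult_nonpos_nonneg mult_le_0_iff)
      qed
      also have "\<dots> = (K3 * norm x) * (norm x)^2" by (simp add: power2_eq_square power3_eq_cube)
      also have "\<dots> \<le> (e / 3) * (norm x)^2"
      proof -
        have "K3 * norm x \<le> K3 * (e / (3 * K3))" using x1(5) K3 by (intro mult_left_mono) auto
        also have "\<dots> = e / 3" using K3 by simp
        finally show ?thesis by (intro mult_right_mono) auto
      qed
      finally show ?thesis .
    qed
    have eq: "F (G x) - L (M x) - (L (r x) + q (M x))
        = (F (G x) - L (G x) - q (G x)) + L (G x - M x - r x) + (q (G x) - q (M x))"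
    proof -
      have "L (G x - M x - r x) = L (G x) - L (M x) - L (r x)"
        using linear_diff[OF bounded_linear.linear[OF bL]] by metis
      then show ?thesis by (simp add: algebra_simps)
    qed
    have "norm (F (G x) - L (M x) - (L (r x) + q (M x)))
        \<le> norm (F (G x) - L (G x) - q (G x)) + norm (L (G x - M x - r x)) + norm (q (G x) - q (M x))"
      unfolding eq by (intro order_trans[OF norm_triangle_ineq] add_right_mono norm_triangle_ineq)
    also have "\<dots> \<le> e / 3 * (norm x)^2 + e / 3 * (norm x)^2 + e / 3 * (norm x)^2"
      using t1 t2 t3 by linarith
    finally show "norm (F (G x) - L (M x) - (L (r x) + q (M x))) \<le> e * (norm x)^2" by simp
  qed
qed



definition den :: "'a::real_inner \<Rightarrow> 'a \<Rightarrow> real" where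
  "den v y = 1 + 2 * (v \<bullet> y) + (v \<bullet> v) * (y \<bullet> y)"

definition pbf :: "'a::real_inner \<Rightarrow> 'a \<Rightarrow> 'a" where
  "pbf v y = (1 / den v y) *\<^sub>R (y + (y \<bullet> y) *\<^sub>R v)"

definition Q0 :: "'a::real_inner \<Rightarrow> 'a \<Rightarrow> 'a" where
  "Q0 v y = (y \<bullet> y) *\<^sub>R v - (2 * (v \<bullet> y)) *\<^sub>R y"

lemma P_a_eq:
  assumes "k \<ge> 1"
  shows "P_a k = (\<lambda>y::real^'n. (1 / real k) *\<^sub>R y)"
proof
  fix y :: "real^'n"
  show "P_a k y = (1 / real k) *\<^sub>R y"
  proof (cases "y = 0")
    case True then show ?thesis by (simp add: P_a_def phibar_inv_def rho_a_def phibar_def)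
  next
    case False
    then have n: "norm y > 0" by simp
    have "P_a k y = (1 / (norm (real k *\<^sub>R ((1 / (norm y)^2) *\<^sub>R y)))\<^sup>2) *\<^sub>R (real k *\<^sub>R ((1 / (norm y)^2) *\<^sub>R y))"
      using False by (simp add: P_a_def phibar_inv_def rho_a_def phibar_def)
    also have "\<dots> = (1 / real k) *\<^sub>R y"
      using n assms by (simp add: power_mult_distrib field_simps power2_eq_square)
    finally show ?thesis .
  qed
qed

lemma P_b_eq: "P_b (B::real^'n^'n) i = pbf (column i B)"
proof
  fix y :: "real^'n"
  define v where "v = column i B"
  show "P_b B i y = pbf (column i B) y"
  proof (cases "y = 0")
    case True then show ?thesis by (simp add: P_b_def phibar_inv_def rho_b_def phibar_def pbf_def)
  next
    case False
    define s where "s = y \<bullet> y"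
    have s: "s > 0" using False by (simp add: s_def)
    have ns: "(norm y)^2 = s" by (simp add: s_def power2_norm_eq_inner)
    define x where "x = (1 / s) *\<^sub>R y + v"
    have P: "P_b B i y = (1 / (x \<bullet> x)) *\<^sub>R x"
      using False by (simp add: P_b_def phibar_inv_def rho_b_def phibar_def x_def v_def ns power2_norm_eq_inner s_def)
    have xx: "x \<bullet> x = den v y / s"
      using s by (simp add: x_def den_def inner_add_left inner_add_right s_def[symmetric] field_simps inner_commute power2_eq_square)
    show ?thesis
    proof (cases "den v y = 0")
      case True
      then have "x = 0" using xx by simp
      then show ?thesis using True by (simp add: P pbf_def v_def[symmetric])
    next
      case d: False
      have "(1 / (x \<bullet> x)) *\<^sub>R x = (1 / den v y) *\<^sub>R (y + s *\<^sub>R v)"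
      proof -
        have "(1 / (x \<bullet> x)) *\<^sub>R x = (s / den v y) *\<^sub>R x" using xx by simp
        also have "\<dots> = (1 / den v y) *\<^sub>R (y + s *\<^sub>R v)"
          unfolding x_def using s d by (simp add: scaleR_add_right)
        finally show ?thesis .
      qed
      then show ?thesis by (simp add: P pbf_def v_def[symmetric] s_def)
    qed
  qed
qed



definition Dpb :: "'a::real_inner \<Rightarrow> 'a \<Rightarrow> 'a \<Rightarrow> 'a" where
  "Dpb v y h = (1 / den v y) *\<^sub>R (h + (2 * (y \<bullet> h)) *\<^sub>R v)
     - ((2 * (v \<bullet> h) + (v \<bullet> v) * (2 * (y \<bullet> h))) / (den v y)^2) *\<^sub>R (y + (y \<bullet> y) *\<^sub>R v)"

lemma pbf_deriv:
  assumes nz: "den v y \<noteq> 0"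
  shows "(pbf v has_derivative Dpb v y) (at y)"
proof -
  have d1: "(den v has_derivative (\<lambda>h. 2 * (v \<bullet> h) + (v \<bullet> v) * (y \<bullet> h + h \<bullet> y))) (at y)"
    unfolding den_def[abs_def] by (auto intro!: derivative_eq_intros)
  have d2: "((\<lambda>y. y + (y \<bullet> y) *\<^sub>R v) has_derivative (\<lambda>h. h + (y \<bullet> h + h \<bullet> y) *\<^sub>R v)) (at y)"
    by (auto intro!: derivative_eq_intros)
  have "((\<lambda>y. inverse (den v y) *\<^sub>R (y + (y \<bullet> y) *\<^sub>R v)) has_derivative
     (\<lambda>h. inverse (den v y) *\<^sub>R (h + (y \<bullet> h + h \<bullet> y) *\<^sub>R v)
        + (- (inverse (den v y) * (2 * (v \<bullet> h) + (v \<bullet> v) * (y \<bullet> h + h \<bullet> y)) * inverse (den v y))) *\<^sub>R (y + (y \<bullet> y) *\<^sub>R v))) (at y)"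
    by (rule has_derivative_scaleR[OF Deriv.has_derivative_inverse[OF nz d1] d2])
  moreover have "(\<lambda>y. inverse (den v y) *\<^sub>R (y + (y \<bullet> y) *\<^sub>R v)) = pbf v"
    by (simp add: pbf_def[abs_def] inverse_eq_divide)
  moreover have "(\<lambda>h. inverse (den v y) *\<^sub>R (h + (y \<bullet> h + h \<bullet> y) *\<^sub>R v)
        + (- (inverse (den v y) * (2 * (v \<bullet> h) + (v \<bullet> v) * (y \<bullet> h + h \<bullet> y)) * inverse (den v y))) *\<^sub>R (y + (y \<bullet> y) *\<^sub>R v)) = Dpb v y"
    by (auto simp: fun_eq_iff Dpb_def inner_commute power2_eq_square inverse_eq_divide algebra_simps add_divide_distrib scaleR_add_left)
  ultimately show ?thesis by simp
qed

lemma den_cont: "continuous_on UNIV (den v)"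
  unfolding den_def[abs_def] by (intro continuous_intros)

lemma den0: "den v 0 = 1" by (simp add: den_def)

lemma pbf_taylor:
  fixes v :: "'a::euclidean_space"
  shows "jet (pbf v) (blinfun_apply (D1 (pbf v))) (\<lambda>y. (1/2) *\<^sub>R blinfun_apply (blinfun_apply (D2 (pbf v)) y) y)"
proof -
  define U where "U = {y. 0 < den v y}"
  have U: "open U" "0 \<in> U" unfolding U_def
    using open_Collect_less[OF continuous_on_const den_cont] by (auto simp: den0)
  have fd: "frechet_derivative (pbf v) (at y) = Dpb v y" if "y \<in> U" for y
    using pbf_deriv[of v y] that frechet_derivative_at by (force simp: U_def)
  show ?thesis
  proof (rule taylor_jet[OF U])
    show "pbf v 0 = 0" by (simp add: pbf_def)
    show "\<forall>x\<in>U. pbf v differentiable at x"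
      using pbf_deriv by (force simp: U_def differentiable_def)
    show "\<forall>e. (\<lambda>x. frechet_derivative (pbf v) (at x) e) differentiable at 0"
    proof
      fix e
      have "(\<lambda>x. Dpb v x e) differentiable at 0"
        unfolding Dpb_def by (intro derivative_intros) (auto simp: den_def)
      then obtain D where D: "((\<lambda>x. Dpb v x e) has_derivative D) (at 0)" by (auto simp: differentiable_def)
      have "((\<lambda>x. frechet_derivative (pbf v) (at x) e) has_derivative D) (at 0)"
        by (rule has_derivative_transform_within_open[OF D U]) (simp add: fd)
      then show "(\<lambda>x. frechet_derivative (pbf v) (at x) e) differentiable at 0" by (auto simp: differentiable_def)
    qed
  qed
qed



lemma R_eq:
  fixes v y :: "'a::real_inner"
  shows "(y + (y \<bullet> y) *\<^sub>R v) - den v y *\<^sub>R (y + Q0 v y) =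
    (- 2 * (v \<bullet> y) * (y \<bullet> y) - (v \<bullet> v) * (y \<bullet> y)^2) *\<^sub>R v
    + (4 * (v \<bullet> y)^2 - (v \<bullet> v) * (y \<bullet> y) + 2 * (v \<bullet> v) * (y \<bullet> y) * (v \<bullet> y)) *\<^sub>R y"
  by (simp add: den_def Q0_def algebra_simps power2_eq_square scaleR_add_left)

lemma R_bound:
  fixes v y :: "'a::real_inner"
  assumes ny: "norm y \<le> 1"
  shows "norm ((y + (y \<bullet> y) *\<^sub>R v) - den v y *\<^sub>R (y + Q0 v y)) \<le> (7 * (norm v)^2 + 3 * (norm v)^3) * (norm y)^3"
proof -
  define p where "p = v \<bullet> y"
  define a where "a = norm y"
  define b where "b = norm v"
  have a0: "0 \<le> a" and b0: "0 \<le> b" and a1: "a \<le> 1" using ny by (auto simp: a_def b_def)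
  have s: "y \<bullet> y = a^2" and w: "v \<bullet> v = b^2" by (simp_all add: a_def b_def power2_norm_eq_inner)
  have p: "\<bar>p\<bar> \<le> b * a" unfolding p_def a_def b_def by (rule Cauchy_Schwarz_ineq2)
  have p2: "p^2 \<le> b^2 * a^2"
  proof -
    have "p^2 = \<bar>p\<bar>^2" by simp
    also have "\<dots> \<le> (b * a)^2" using p by (intro power_mono) auto
    finally show ?thesis by (simp add: power_mult_distrib)
  qed
  have a43: "a^4 \<le> a^3" using a0 a1 by (simp add: power_decreasing)
  have "norm ((y + (y \<bullet> y) *\<^sub>R v) - den v y *\<^sub>R (y + Q0 v y))
     = norm ((- 2 * p * a^2 - b^2 * (a^2)^2) *\<^sub>R v + (4 * p^2 - b^2 * a^2 + 2 * b^2 * a^2 * p) *\<^sub>R y)"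
    unfolding R_eq by (simp add: s w p_def)
  also have "\<dots> \<le> \<bar>- 2 * p * a^2 - b^2 * (a^2)^2\<bar> * b + \<bar>4 * p^2 - b^2 * a^2 + 2 * b^2 * a^2 * p\<bar> * a"
    by (rule order_trans[OF norm_triangle_ineq]) (simp add: a_def b_def)
  also have "\<dots> \<le> (2 * \<bar>p\<bar> * a^2 + b^2 * a^4) * b + (4 * p^2 + b^2 * a^2 + 2 * b^2 * a^2 * \<bar>p\<bar>) * a"
  proof (intro add_mono mult_right_mono)
    show "\<bar>- 2 * p * a^2 - b^2 * (a^2)^2\<bar> \<le> 2 * \<bar>p\<bar> * a^2 + b^2 * a^4"
      by (rule order_trans[OF abs_triangle_ineq4]) (simp add: abs_mult power_mult[symmetric])
    show "\<bar>4 * p^2 - b^2 * a^2 + 2 * b^2 * a^2 * p\<bar> \<le> 4 * p^2 + b^2 * a^2 + 2 * b^2 * a^2 * \<bar>p\<bar>"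
      by (rule order_trans[OF abs_triangle_ineq], rule add_mono[OF abs_triangle_ineq4[THEN order_trans]]) (auto simp: abs_mult)
  qed (use a0 b0 in auto)
  also have "\<dots> = 2 * (\<bar>p\<bar> * (a^2 * b)) + b^3 * a^4 + 4 * (p^2 * a) + b^2 * a^3 + 2 * b^2 * a^3 * \<bar>p\<bar>"
    by (simp add: algebra_simps power2_eq_square power3_eq_cube)
  also have "\<dots> \<le> 2 * ((b * a) * (a^2 * b)) + b^3 * a^3 + 4 * ((b^2 * a^2) * a) + b^2 * a^3 + 2 * b^2 * a^3 * (b * a)"
  proof (intro add_mono mult_left_mono mult_right_mono p p2 a43)
  qed (use a0 b0 in auto)
  also have "\<dots> \<le> 2 * ((b * a) * (a^2 * b)) + b^3 * a^3 + 4 * ((b^2 * a^2) * a) + b^2 * a^3 + 2 * b^2 * a^3 * b"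
  proof -
    have "b * a \<le> b" using a1 b0 a0 by (metis mult_left_le mult.commute)
    then have "2 * b^2 * a^3 * (b * a) \<le> 2 * b^2 * a^3 * b" using a0 b0 by (intro mult_left_mono) auto
    then show ?thesis by linarith
  qed
  also have "\<dots> = (7 * b^2 + 3 * b^3) * a^3"
    by (simp add: algebra_simps power2_eq_square power3_eq_cube)
  finally show ?thesis by (simp add: a_def b_def)
qed

lemma pbf_jet:
  fixes v :: "'a::real_inner"
  shows "jet (pbf v) (\<lambda>y. y) (Q0 v)"
  unfolding jet_def
proof (intro allI impI)
  fix e :: real assume e: "e > 0"
  define b where "b = norm v"
  define C where "C = 7 * b^2 + 3 * b^3"
  have b0: "b \<ge> 0" by (simp add: b_def)
  have C0: "C \<ge> 0" using b0 by (simp add: C_def)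
  define d where "d = min 1 (min (1 / (4 * b + 1)) (e / (2 * C + 1)))"
  show "\<exists>d>0. \<forall>y. norm y < d \<longrightarrow> norm (pbf v y - y - Q0 v y) \<le> e * (norm y)^2"
  proof (intro exI[of _ d] conjI allI impI)
    show "d > 0" using b0 C0 e by (simp add: d_def)
    fix y :: 'a assume y: "norm y < d"
    define a where "a = norm y"
    have a0: "a \<ge> 0" by (simp add: a_def)
    have y1: "a \<le> 1" "a < 1 / (4 * b + 1)" "a < e / (2 * C + 1)" using y by (auto simp: d_def a_def)
    have ba: "b * a \<le> 1/4"
    proof -
      have "b * a \<le> b * (1 / (4 * b + 1))" using y1(2) b0 by (intro mult_left_mono) auto
      also have "\<dots> \<le> 1/4" using b0 by (simp add: field_simps)
      finally show ?thesis .
    qed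
    have dn: "den v y \<ge> 1/2"
    proof -
      have "\<bar>v \<bullet> y\<bar> \<le> b * a" unfolding a_def b_def by (rule Cauchy_Schwarz_ineq2)
      moreover have "(v \<bullet> v) * (y \<bullet> y) \<ge> 0" by simp
      ultimately show ?thesis using ba unfolding den_def by linarith
    qed
    have eq: "pbf v y - y - Q0 v y = (1 / den v y) *\<^sub>R ((y + (y \<bullet> y) *\<^sub>R v) - den v y *\<^sub>R (y + Q0 v y))"
      using dn by (simp add: pbf_def scaleR_diff_right)
    have "norm (pbf v y - y - Q0 v y) = norm ((y + (y \<bullet> y) *\<^sub>R v) - den v y *\<^sub>R (y + Q0 v y)) / den v y"
      unfolding eq using dn by simp
    also have "\<dots> \<le> 2 * norm ((y + (y \<bullet> y) *\<^sub>R v) - den v y *\<^sub>R (y + Q0 v y))"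
    proof -
      have "norm ((y + (y \<bullet> y) *\<^sub>R v) - den v y *\<^sub>R (y + Q0 v y)) * 1 \<le> norm ((y + (y \<bullet> y) *\<^sub>R v) - den v y *\<^sub>R (y + Q0 v y)) * (2 * den v y)"
        using dn by (intro mult_left_mono) auto
      then show ?thesis using dn by (simp add: divide_le_eq mult.assoc mult.commute mult.left_commute)
    qed
    also have "\<dots> \<le> 2 * (C * a^3)"
      using R_bound[of y v] y1(1) by (simp add: C_def a_def b_def)
    also have "\<dots> = ((2 * C) * a) * a^2" by (simp add: power2_eq_square power3_eq_cube)
    also have "\<dots> \<le> e * a^2"
    proof -
      have "(2 * C) * a \<le> (2 * C + 1) * a" using a0 by (intro mult_right_mono) auto
      also have "\<dots> \<le> (2 * C + 1) * (e / (2 * C + 1))" using y1(3) C0 by (intro mult_left_mono) auto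
      also have "\<dots> = e" using C0 by simp
      finally show ?thesis by (intro mult_right_mono) auto
    qed
    finally show "norm (pbf v y - y - Q0 v y) \<le> e * (norm y)^2" by (simp add: a_def)
  qed
qed

lemma Q0_hom: "Q0 v (t *\<^sub>R x) = t^2 *\<^sub>R Q0 v x"
  by (simp add: Q0_def algebra_simps power2_eq_square)

lemma D2_hom: "(1/2) *\<^sub>R blinfun_apply (blinfun_apply (D2 F) (t *\<^sub>R x)) (t *\<^sub>R x)
   = t^2 *\<^sub>R ((1/2) *\<^sub>R blinfun_apply (blinfun_apply (D2 F) x) x)"
  by (simp add: blinfun.scaleR_left blinfun.scaleR_right power2_eq_square)

lemma pbf_D:
  fixes v :: "'a::euclidean_space"
  shows "D1 (pbf v) = id_blinfun" "(1/2) *\<^sub>R blinfun_apply (blinfun_apply (D2 (pbf v)) y) y = Q0 v y"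
proof -
  have lin: "linear (blinfun_apply (D1 (pbf v)))" by (rule bounded_linear.linear[OF blinfun.bounded_linear_right])
  have "\<And>y. blinfun_apply (D1 (pbf v)) y = y \<and> (1/2) *\<^sub>R blinfun_apply (blinfun_apply (D2 (pbf v)) y) y = Q0 v y"
    by (rule jet_unique[OF pbf_taylor pbf_jet _ lin linear_id[unfolded id_def] D2_hom Q0_hom]) simp
  then show "D1 (pbf v) = id_blinfun" "(1/2) *\<^sub>R blinfun_apply (blinfun_apply (D2 (pbf v)) y) y = Q0 v y"
    by (auto intro: blinfun_eqI)
qed



lemma quadf_D2: "quadf (\<lambda>y. (1/2) *\<^sub>R blinfun_apply (blinfun_apply (D2 F) y) y)"
  unfolding quadf_def by (rule exI[of _ "(1/2) *\<^sub>R D2 F"]) (simp add: blinfun.scaleR_left)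

lemma quadf_scale: "quadf q \<Longrightarrow> quadf (\<lambda>x. c *\<^sub>R q x)"
proof -
  assume "quadf q"
  then obtain T :: "'a \<Rightarrow>\<^sub>L 'a \<Rightarrow>\<^sub>L 'a" where T: "\<forall>x. q x = T x x" unfolding quadf_def by blast
  show ?thesis unfolding quadf_def
    by (rule exI[of _ "c *\<^sub>R T"]) (simp add: T blinfun.scaleR_left)
qed

lemma diffeo_taylor:
  fixes F :: "'a::euclidean_space \<Rightarrow> 'a"
  assumes "local_diffeo0 F"
  shows "F 0 = 0" "(F has_derivative blinfun_apply (D1 F)) (at 0)"
    "jet F (blinfun_apply (D1 F)) (\<lambda>y. (1/2) *\<^sub>R blinfun_apply (blinfun_apply (D2 F) y) y)"
proof -
  obtain U where U: "open U" "0 \<in> U" "smooth_on U F" and F0: "F 0 = 0"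
    using assms unfolding local_diffeo0_def by blast
  have dU: "\<forall>x\<in>U. F differentiable (at x)"
    using U spec[OF U(3)[unfolded smooth_on_def], of "[]"]
    by (simp add: differentiable_on_eq_differentiable_at)
  have dG: "\<forall>e. (\<lambda>x. frechet_derivative F (at x) e) differentiable (at 0)"
  proof
    fix e
    have "ddir e F differentiable_on U" using spec[OF U(3)[unfolded smooth_on_def], of "[e]"] by simp
    then show "(\<lambda>x. frechet_derivative F (at x) e) differentiable (at 0)"
      using U by (simp add: differentiable_on_eq_differentiable_at ddir_def)
  qed
  show "F 0 = 0" by (rule F0)
  show "jet F (blinfun_apply (D1 F)) (\<lambda>y. (1/2) *\<^sub>R blinfun_apply (blinfun_apply (D2 F) y) y)"
    by (rule taylor_jet[OF U(1,2) F0 dU dG])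
  have "(F has_derivative frechet_derivative F (at 0)) (at 0)"
    using dU U(2) frechet_derivative_works by blast
  moreover then have "blinfun_apply (D1 F) = frechet_derivative F (at 0)"
    unfolding D1_def by (simp add: bounded_linear_Blinfun_apply has_derivative_bounded_linear)
  ultimately show "(F has_derivative blinfun_apply (D1 F)) (at 0)" by simp
qed

lemma funpow_deriv:
  fixes B b :: "'a::real_normed_vector \<Rightarrow> 'a"
  assumes "(B has_derivative b) (at 0)" "B 0 = 0"
  shows "((B ^^ m) has_derivative (b ^^ m)) (at 0) \<and> (B ^^ m) 0 = 0"
proof (induction m)
  case 0
  have "B ^^ 0 = (\<lambda>x. x)" "b ^^ 0 = (\<lambda>x. x)" by auto
  then show ?case by (simp add: has_derivative_ident)
next
  case (Suc m)
  then have "((\<lambda>x. B ((B ^^ m) x)) has_derivative (\<lambda>x. b ((b ^^ m) x))) (at 0)"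
    using has_derivative_compose[of "B ^^ m" "b ^^ m" 0 UNIV B b] assms by simp
  then show ?case using Suc assms by (simp add: comp_def)
qed

lemma jet_iter:
  fixes B :: "'a::real_normed_vector \<Rightarrow> 'a"
  assumes J: "jet B (\<lambda>x. x) q" and Q: "quadf q"
  shows "jet (B ^^ m) (\<lambda>x. x) (\<lambda>x. real m *\<^sub>R q x)"
proof (induction m)
  case 0 then show ?case by (simp add: jet_def)
next
  case (Suc m)
  have "jet (\<lambda>x. B ((B ^^ m) x)) (\<lambda>x. x) (\<lambda>x. real m *\<^sub>R q x + q x)"
    using jet_compose[OF J Suc bounded_linear_ident bounded_linear_ident Q quadf_scale[OF Q]] by simp
  then show ?case by (simp add: algebra_simps)
qed



lemma pow_bound:
  fixes b :: "'a::real_normed_vector \<Rightarrow>\<^sub>L 'a"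
  defines "M \<equiv> b - id_blinfun"
  shows "norm ((blinfun_apply b ^^ m) x - x - real m *\<^sub>R M x)
     \<le> (norm M)^2 * (real m)^2 * (1 + norm M)^m * norm x"
proof (induction m)
  case 0 then show ?case by simp
next
  case (Suc m)
  define \<mu> where "\<mu> = norm M"
  define r where "r = \<mu>^2 * (real m)^2 * (1 + \<mu>)^m"
  define y where "y = (blinfun_apply b ^^ m) x"
  define R where "R = y - x - real m *\<^sub>R M x"
  have \<mu>0: "\<mu> \<ge> 0" by (simp add: \<mu>_def)
  have R: "norm R \<le> r * norm x" using Suc by (simp add: R_def y_def r_def \<mu>_def)
  have r0: "r \<ge> 0" using \<mu>0 by (simp add: r_def)
  have hby: "b y = y + M y" by (simp add: M_def blinfun.diff_left)
  have eq: "(blinfun_apply b ^^ Suc m) x - x - real (Suc m) *\<^sub>R M x = R + real m *\<^sub>R M (M x) + M R"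
  proof -
    have "y - x = real m *\<^sub>R M x + R" by (simp add: R_def)
    then have "M y - M x = real m *\<^sub>R M (M x) + M R"
      by (metis blinfun.add_right blinfun.diff_right blinfun.scaleR_right)
    then show ?thesis
      by (simp add: y_def[symmetric] hby R_def algebra_simps)
  qed
  have "norm (R + real m *\<^sub>R M (M x) + M R) \<le> norm R + real m * (\<mu> * (\<mu> * norm x)) + \<mu> * norm R"
  proof -
    have "norm (M (M x)) \<le> \<mu> * (\<mu> * norm x)"
      unfolding \<mu>_def by (rule order_trans[OF norm_blinfun]) (intro mult_left_mono norm_blinfun, simp)
    moreover have "norm (M R) \<le> \<mu> * norm R" unfolding \<mu>_def by (rule norm_blinfun)
    ultimately show ?thesis
      by (intro order_trans[OF norm_triangle_ineq] add_mono order_trans[OF norm_triangle_ineq]) (auto intro: mult_left_mono)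
  qed
  also have "\<dots> \<le> r * norm x + real m * (\<mu> * (\<mu> * norm x)) + \<mu> * (r * norm x)"
    using R \<mu>0 by (intro add_mono mult_left_mono) auto
  also have "\<dots> = ((1 + \<mu>) * r + real m * \<mu>^2) * norm x" by (simp add: algebra_simps power2_eq_square)
  also have "\<dots> \<le> (\<mu>^2 * (real (Suc m))^2 * (1 + \<mu>)^(Suc m)) * norm x"
  proof (intro mult_right_mono)
    define P where "P = (1 + \<mu>)^(Suc m)"
    have P1: "P \<ge> 1" unfolding P_def using \<mu>0 by (intro one_le_power) simp
    have h: "2 * real m + 1 \<le> (2 * real m + 1) * P" using mult_left_mono[OF P1, of "2 * real m + 1"] by simp
    then have "real m \<le> (2 * real m + 1) * P" by linarith
    then have "\<mu>^2 * ((real m)^2 * P + real m) \<le> \<mu>^2 * ((real m)^2 * P + (2 * real m + 1) * P)"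
      by (intro mult_left_mono) auto
    moreover have "(1 + \<mu>) * r + real m * \<mu>^2 = \<mu>^2 * ((real m)^2 * P + real m)"
      by (simp add: r_def P_def algebra_simps power2_eq_square)
    moreover have "\<mu>^2 * (real (Suc m))^2 * (1 + \<mu>)^(Suc m) = \<mu>^2 * ((real m)^2 * P + (2 * real m + 1) * P)"
      by (simp add: P_def algebra_simps power2_eq_square)
    ultimately show "(1 + \<mu>) * r + real m * \<mu>^2 \<le> \<mu>^2 * (real (Suc m))^2 * (1 + \<mu>)^(Suc m)"
      by linarith
  qed simp
  finally show ?case using eq by (simp add: \<mu>_def)
qed

lemma lin_fix:
  fixes a b :: "'a::real_normed_vector \<Rightarrow>\<^sub>L 'a" and k :: nat and \<epsilon> :: real
  assumes k: "k \<ge> 2" and rel: "\<And>x. a (b x) = (blinfun_apply b ^^ k) (a x)"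
    and ea: "norm (a - (1 / real k) *\<^sub>R id_blinfun) < \<epsilon>" and eb: "norm (b - id_blinfun) < \<epsilon>"
    and e1: "\<epsilon> \<le> 1" and e2: "\<epsilon> * (4 * (1 + real k + 2 * (real k)^2 * 2^k)) \<le> 1"
  shows "b = id_blinfun"
proof -
  define M where "M = b - id_blinfun"
  define \<mu> where "\<mu> = norm M"
  define E where "E = a - (1 / real k) *\<^sub>R id_blinfun"
  define K where "K = real k"
  have K2: "K \<ge> 2" using k by (simp add: K_def)
  have \<mu>0: "\<mu> \<ge> 0" by (simp add: \<mu>_def)
  have \<mu>\<epsilon>: "\<mu> < \<epsilon>" using eb by (simp add: \<mu>_def M_def)
  have E\<epsilon>: "norm E < \<epsilon>" using ea by (simp add: E_def)
  have Exb: "norm (E x) \<le> \<epsilon> * norm x" for x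
    by (rule order_trans[OF norm_blinfun mult_right_mono[OF less_imp_le[OF E\<epsilon>] norm_ge_zero]])
  have bx: "b x = x + M x" for x by (simp add: M_def blinfun.diff_left)
  have ax: "a x = (1 / K) *\<^sub>R x + E x" for x by (simp add: E_def K_def blinfun.diff_left blinfun.scaleR_left)
  have na: "norm (a x) \<le> 2 * norm x" for x
  proof -
    have "norm (a x) \<le> norm ((1 / K) *\<^sub>R x) + norm (E x)" unfolding ax by (rule norm_triangle_ineq)
    also have "\<dots> \<le> (1 / K) * norm x + \<epsilon> * norm x"
    proof (intro add_mono)
      show "norm ((1 / K) *\<^sub>R x) \<le> (1 / K) * norm x" using K2 by simp
      show "norm (E x) \<le> \<epsilon> * norm x"
        by (rule Exb)
    qed
    also have "\<dots> \<le> 2 * norm x"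
    proof -
      have "1 / K \<le> 1" using K2 by simp
      then have "1 / K + \<epsilon> \<le> 2" using e1 by linarith
      then show ?thesis by (metis distrib_right mult_right_mono norm_ge_zero)
    qed
    finally show ?thesis .
  qed
  have Mx: "norm (M x) \<le> (\<mu> / 2) * norm x" for x
  proof -
    define R where "R = (blinfun_apply b ^^ k) (a x) - a x - K *\<^sub>R M (a x)"
    have R: "norm R \<le> \<mu>^2 * K^2 * 2^k * (2 * norm x)"
    proof -
      have "norm R \<le> \<mu>^2 * K^2 * (1 + \<mu>)^k * norm (a x)"
        unfolding R_def K_def \<mu>_def M_def by (rule pow_bound)
      also have "\<dots> \<le> \<mu>^2 * K^2 * 2^k * (2 * norm x)"
      proof -
        have f1: "\<mu>^2 * K^2 * (1 + \<mu>)^k \<le> \<mu>^2 * K^2 * 2^k"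
          using \<mu>0 \<mu>\<epsilon> e1 by (intro mult_left_mono power_mono) auto
        show ?thesis by (rule mult_mono[OF f1 na]) (use \<mu>0 in auto)
      qed
      finally show ?thesis .
    qed
    have eq: "(1 - 1 / K) *\<^sub>R M x = E (M x) - K *\<^sub>R M (E x) - R"
    proof -
      have "a (b x) = a x + (1 / K) *\<^sub>R M x + E (M x)"
        unfolding bx by (simp add: blinfun.add_right ax)
      moreover have "(blinfun_apply b ^^ k) (a x) = a x + M x + K *\<^sub>R M (E x) + R"
      proof -
        have "K *\<^sub>R M (a x) = M x + K *\<^sub>R M (E x)"
          using K2 by (simp add: ax blinfun.add_right blinfun.scaleR_right scaleR_add_right)
        then show ?thesis by (simp add: R_def algebra_simps)
      qed
      ultimately have "a x + (1 / K) *\<^sub>R M x + E (M x) = a x + M x + K *\<^sub>R M (E x) + R" using rel by simp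
      then show ?thesis by (simp add: algebra_simps)
    qed
    have "(1 - 1 / K) * norm (M x) \<le> norm (E (M x)) + norm (K *\<^sub>R M (E x)) + norm R"
    proof -
      have "(1 - 1 / K) * norm (M x) = norm ((1 - 1 / K) *\<^sub>R M x)" using K2 by simp
      also have "\<dots> \<le> norm (E (M x)) + norm (K *\<^sub>R M (E x)) + norm R"
        unfolding eq by (intro order_trans[OF norm_triangle_ineq4] add_right_mono norm_triangle_ineq4)
      finally show ?thesis .
    qed
    also have "\<dots> \<le> \<epsilon> * (\<mu> * norm x) + K * (\<mu> * (\<epsilon> * norm x)) + \<mu>^2 * K^2 * 2^k * (2 * norm x)"
    proof (intro add_mono R)
      have "norm (M x) \<le> \<mu> * norm x" unfolding \<mu>_def by (rule norm_blinfun)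
      show "norm (E (M x)) \<le> \<epsilon> * (\<mu> * norm x)"
        by (rule order_trans[OF norm_blinfun], rule mult_mono) (use E\<epsilon> \<open>norm (M x) \<le> \<mu> * norm x\<close> \<mu>0 \<mu>\<epsilon> in auto)
      have "norm (M (E x)) \<le> \<mu> * (\<epsilon> * norm x)"
        using mult_left_mono[OF Exb[of x] norm_ge_zero[of M]] norm_blinfun[of M "E x"] unfolding \<mu>_def by linarith
      then show "norm (K *\<^sub>R M (E x)) \<le> K * (\<mu> * (\<epsilon> * norm x))" using K2 by simp
    qed
    also have "\<dots> \<le> \<epsilon> * (\<mu> * norm x) + K * (\<mu> * (\<epsilon> * norm x)) + (\<mu> * \<epsilon>) * K^2 * 2^k * (2 * norm x)"
    proof -
      have "\<mu>^2 \<le> \<mu> * \<epsilon>" using \<mu>0 \<mu>\<epsilon> by (simp add: power2_eq_square mult_left_mono)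
      then show ?thesis by (intro add_left_mono mult_right_mono) auto
    qed
    also have "\<dots> = (\<mu> / 4) * (\<epsilon> * (4 * (1 + K + 2 * K^2 * 2^k))) * norm x"
      by (simp add: algebra_simps)
    also have "\<dots> \<le> (\<mu> / 4) * 1 * norm x"
      using e2 \<mu>0 by (intro mult_right_mono mult_left_mono) (auto simp: K_def)
    finally have h: "(1 - 1 / K) * norm (M x) \<le> (\<mu> / 4) * norm x" by simp
    have "1 / 2 \<le> 1 - 1 / K" using K2 by (simp add: field_simps)
    then have "(1 / 2) * norm (M x) \<le> (1 - 1 / K) * norm (M x)" by (intro mult_right_mono) auto
    with h show ?thesis by linarith
  qed
  have "\<mu> \<le> \<mu> / 2" unfolding \<mu>_def by (rule norm_blinfun_bound) (use \<mu>0 Mx in \<open>auto simp: \<mu>_def\<close>)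
  then have "\<mu> = 0" using \<mu>0 by simp
  then show ?thesis by (simp add: \<mu>_def M_def)
qed



lemma Q0_polar: fixes v u :: "real^'n"
  shows "Q0 v (v + u) - Q0 v v - Q0 v u = - ((v \<bullet> v) *\<^sub>R u) - (v \<bullet> v) *\<^sub>R u"
  unfolding vec_eq_iff by (simp add: Q0_def inner_add_left inner_add_right inner_commute algebra_simps)

lemma Q0_vv: "Q0 v v = - ((v \<bullet> v) *\<^sub>R v)"
  by (simp add: Q0_def scaleR_diff_left[symmetric])

lemma grp_aux:
  fixes a p q r z A :: "'a::ab_group_add"
  assumes "- a - a + p + q + r = A" "A = - a + z"
  shows "a = p + q + r - z"
proof -
  have "p + q + r - z = (- a - a + p + q + r) - (- a + z) + a" by (simp add: algebra_simps)
  also have "\<dots> = a" using assms by simp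
  finally show ?thesis by simp
qed

lemma bil_norm: "norm (blinfun_apply (blinfun_apply T x) y) \<le> norm T * norm x * norm y"
proof -
  have "norm (T x y) \<le> norm (T x) * norm y" by (rule norm_blinfun)
  also have "\<dots> \<le> norm T * norm x * norm y" by (intro mult_right_mono norm_blinfun) simp
  finally show ?thesis .
qed

lemma local_step:
  fixes c X :: "(real^'n) \<Rightarrow>\<^sub>L (real^'n)" and T W :: "(real^'n) \<Rightarrow>\<^sub>L (real^'n) \<Rightarrow>\<^sub>L (real^'n)"
  assumes crel: "c (T v v) = T (c v) (c v)" and X: "X = c - id_blinfun"
    and W: "\<And>y. W y y = Q0 v y"
    and \<sigma>: "norm (T - W) \<le> \<sigma>" and \<tau>: "norm T \<le> \<tau>"
    and sm: "2 * \<sigma> + \<tau> * norm X \<le> norm v / 2" and v: "v \<noteq> 0"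
  shows "norm (X v) \<le> 2 * norm X * \<sigma>"
proof -
  define u where "u = X v"
  define S where "S = T - W"
  define \<xi> where "\<xi> = norm X"
  have cv: "c v = v + u" by (simp add: u_def X blinfun.diff_left)
  have cw: "c w = w + X w" for w by (simp add: X blinfun.diff_left)
  have TS: "T = W + S" by (simp add: S_def)
  have e1: "T v u + T u v + T u u = X (T v v)"
  proof -
    have "T (v + u) (v + u) = T v v + X (T v v)" using crel cv cw by simp
    then show ?thesis by (simp add: blinfun.add_left blinfun.add_right algebra_simps)
  qed
  have e3: "W v u + W u v = - ((v \<bullet> v) *\<^sub>R u) - (v \<bullet> v) *\<^sub>R u"
  proof -
    have "W (v + u) (v + u) = W v v + W v u + W u v + W u u"
      by (simp add: blinfun.add_left blinfun.add_right algebra_simps)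
    then have "W v u + W u v = Q0 v (v + u) - Q0 v v - Q0 v u" by (simp add: W algebra_simps)
    then show ?thesis by (simp add: Q0_polar)
  qed
  have e4: "T v v = - ((v \<bullet> v) *\<^sub>R v) + S v v" by (simp add: TS blinfun.add_left W Q0_vv)
  have key: "(v \<bullet> v) *\<^sub>R u = S v u + S u v + T u u - X (S v v)"
  proof -
    have f: "T v u + T u v = W v u + W u v + S v u + S u v" by (simp add: TS blinfun.add_left)
    have "- ((v \<bullet> v) *\<^sub>R u) - (v \<bullet> v) *\<^sub>R u + S v u + S u v + T u u = (W v u + W u v) + S v u + S u v + T u u"
      by (simp only: e3)
    also have "\<dots> = (T v u + T u v) + T u u" by (simp only: f)
    also have "\<dots> = X (T v v)" using e1 by simp
    also have "\<dots> = X (- ((v \<bullet> v) *\<^sub>R v) + S v v)" by (simp only: e4)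
    finally have "- ((v \<bullet> v) *\<^sub>R u) - (v \<bullet> v) *\<^sub>R u + S v u + S u v + T u u = X (- ((v \<bullet> v) *\<^sub>R v) + S v v)" .
    moreover have "X (- ((v \<bullet> v) *\<^sub>R v) + S v v) = - ((v \<bullet> v) *\<^sub>R u) + X (S v v)"
      by (simp add: blinfun.add_right blinfun.diff_right blinfun.minus_right blinfun.scaleR_right u_def)
    ultimately show ?thesis by (rule grp_aux)
  qed
  have nv: "norm v > 0" using v by simp
  have \<sigma>0: "\<sigma> \<ge> 0" using \<sigma> norm_ge_zero order_trans by blast
  have \<xi>0: "\<xi> \<ge> 0" by (simp add: \<xi>_def)
  have \<tau>0: "\<tau> \<ge> 0" using \<tau> norm_ge_zero order_trans by blast
  have nu: "norm u \<le> \<xi> * norm v" unfolding u_def \<xi>_def by (rule norm_blinfun)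
  have nS: "norm S \<le> \<sigma>" using \<sigma> by (simp add: S_def)
  have "(norm v)^2 * norm u = norm ((v \<bullet> v) *\<^sub>R u)" by (simp add: power2_norm_eq_inner)
  also have "\<dots> \<le> norm (S v u) + norm (S u v) + norm (T u u) + norm (X (S v v))"
    unfolding key
    by (intro order_trans[OF norm_triangle_ineq4] add_right_mono order_trans[OF norm_triangle_ineq] add_right_mono norm_triangle_ineq)
  also have "\<dots> \<le> \<sigma> * norm v * norm u + \<sigma> * norm u * norm v + \<tau> * norm u * (\<xi> * norm v) + \<xi> * (\<sigma> * norm v * norm v)"
  proof (intro add_mono)
    show "norm (S v u) \<le> \<sigma> * norm v * norm u"
      by (rule order_trans[OF bil_norm]) (intro mult_right_mono nS, auto)
    show "norm (S u v) \<le> \<sigma> * norm u * norm v"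
      by (rule order_trans[OF bil_norm]) (intro mult_right_mono nS, auto)
    show "norm (T u u) \<le> \<tau> * norm u * (\<xi> * norm v)"
      by (rule order_trans[OF bil_norm]) (intro mult_mono nu \<tau>, auto simp: \<tau>0)
    have "norm (S v v) \<le> \<sigma> * norm v * norm v"
      by (rule order_trans[OF bil_norm]) (intro mult_right_mono nS, auto)
    then show "norm (X (S v v)) \<le> \<xi> * (\<sigma> * norm v * norm v)"
      unfolding \<xi>_def by (rule order_trans[OF norm_blinfun mult_left_mono]) auto
  qed
  also have "\<dots> = (2 * \<sigma> + \<tau> * \<xi>) * norm v * norm u + \<xi> * \<sigma> * (norm v)^2"
    by (simp add: algebra_simps power2_eq_square)
  also have "\<dots> \<le> (norm v / 2) * norm v * norm u + \<xi> * \<sigma> * (norm v)^2"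
    using sm by (intro add_right_mono mult_right_mono) (auto simp: \<xi>_def)
  finally have "(norm v)^2 * norm u \<le> (norm v)^2 * (norm u / 2) + (norm v)^2 * (\<xi> * \<sigma>)"
    by (simp add: power2_eq_square algebra_simps)
  then have "(norm v)^2 * (norm u / 2) \<le> (norm v)^2 * (\<xi> * \<sigma>)" by simp
  then have "norm u / 2 \<le> \<xi> * \<sigma>" using nv by simp
  then show ?thesis by (simp add: u_def \<xi>_def)
qed



lemma final_alg:
  fixes a :: "(real^'n) \<Rightarrow>\<^sub>L (real^'n)" and B :: "real^'n^'n" and k :: nat
    and T W :: "'n \<Rightarrow> (real^'n) \<Rightarrow>\<^sub>L (real^'n) \<Rightarrow>\<^sub>L (real^'n)"
  assumes k: "k \<ge> 2"
    and rel: "\<And>i x. a (T i x x) = real k *\<^sub>R T i (a x) (a x)"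
    and W: "\<And>i y. W i y y = Q0 (column i B) y"
    and S: "\<And>i. norm (T i - W i) < \<epsilon> / 2"
    and ea: "norm (a - (1 / real k) *\<^sub>R id_blinfun) < \<epsilon>"
    and m0: "\<And>i. m0 \<le> norm (column i B)" "m0 > 0"
    and Wm: "\<And>i. norm (W i) \<le> Wm"
    and Kinv: "\<And>x. \<exists>y. x = B *v y \<and> norm y \<le> Kinv * norm x"
    and s1: "\<epsilon> \<le> 1" "\<epsilon> + (Wm + 1) * real k * \<epsilon> \<le> m0 / 2"
    and s2: "real CARD('n) * Kinv * \<epsilon> \<le> 1 / 2" and Kinv0: "Kinv \<ge> 0"
  shows "a = (1 / real k) *\<^sub>R id_blinfun"
proof -
  define K where "K = real k"
  have K2: "K \<ge> 2" using k by (simp add: K_def)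
  define c where "c = K *\<^sub>R a"
  define X where "X = c - id_blinfun"
  define \<xi> where "\<xi> = norm X"
  have hX: "X = K *\<^sub>R (a - (1 / K) *\<^sub>R id_blinfun)"
    using K2 by (simp add: X_def c_def scaleR_diff_right)
  have \<xi>: "\<xi> \<le> K * \<epsilon>"
  proof -
    have "\<xi> = K * norm (a - (1 / K) *\<^sub>R id_blinfun)" using K2 by (simp add: \<xi>_def hX)
    also have "\<dots> \<le> K * \<epsilon>" using ea K2 by (intro mult_left_mono) (auto simp: K_def)
    finally show ?thesis .
  qed
  have \<xi>0: "\<xi> \<ge> 0" by (simp add: \<xi>_def)
  have \<epsilon>0: "\<epsilon> > 0" using ea norm_ge_zero by (meson le_less_trans)
  have Xv: "norm (X (column i B)) \<le> \<xi> * \<epsilon>" for i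
  proof -
    have crel: "c (T i (column i B) (column i B)) = T i (c (column i B)) (c (column i B))"
      by (simp add: c_def rel blinfun.scaleR_left blinfun.scaleR_right K_def)
    have \<sigma>: "norm (T i - W i) \<le> \<epsilon> / 2" using S[of i] by simp
    have \<tau>: "norm (T i) \<le> Wm + 1"
    proof -
      have "norm (T i) \<le> norm (W i) + norm (T i - W i)" by (metis add.commute diff_add_cancel norm_triangle_ineq)
      then show ?thesis using Wm[of i] \<sigma> s1(1) by linarith
    qed
    have sm: "2 * (\<epsilon> / 2) + (Wm + 1) * norm X \<le> norm (column i B) / 2"
    proof -
      have Wm0: "Wm + 1 \<ge> 0" using Wm[of i] norm_ge_zero by (meson add_nonneg_nonneg order_trans zero_le_one)
      have "(Wm + 1) * norm X \<le> (Wm + 1) * (K * \<epsilon>)" using \<xi> Wm0 by (intro mult_left_mono) (auto simp: \<xi>_def)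
      then show ?thesis using s1(2) m0(1)[of i] by (simp add: K_def algebra_simps)
    qed
    have v: "column i B \<noteq> 0" using m0(1)[of i] m0(2) by auto
    have "norm (X (column i B)) \<le> 2 * norm X * (\<epsilon> / 2)"
      by (rule local_step[OF crel X_def W \<sigma> \<tau> sm v])
    then show ?thesis by (simp add: \<xi>_def)
  qed
  have Xx: "norm (X x) \<le> (\<xi> / 2) * norm x" for x
  proof -
    obtain y where y: "x = B *v y" "norm y \<le> Kinv * norm x" using Kinv by blast
    have "X x = (\<Sum>i\<in>UNIV. (y $ i) *\<^sub>R X (column i B))"
      unfolding y(1) matrix_mult_sum by (simp add: scalar_mult_eq_scaleR blinfun.sum_right blinfun.scaleR_right)
    then have "norm (X x) \<le> (\<Sum>i\<in>UNIV. norm ((y $ i) *\<^sub>R X (column i B)))"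
      using norm_sum[of "\<lambda>i. (y $ i) *\<^sub>R X (column i B)" UNIV] by simp
    also have "\<dots> \<le> (\<Sum>i\<in>(UNIV::'n set). norm y * (\<xi> * \<epsilon>))"
    proof (rule sum_mono)
      fix i
      have "norm ((y $ i) *\<^sub>R X (column i B)) = \<bar>y $ i\<bar> * norm (X (column i B))" by simp
      also have "\<dots> \<le> norm y * (\<xi> * \<epsilon>)" by (intro mult_mono component_le_norm_cart Xv) auto
      finally show "norm ((y $ i) *\<^sub>R X (column i B)) \<le> norm y * (\<xi> * \<epsilon>)" .
    qed
    also have "\<dots> = real CARD('n) * norm y * (\<xi> * \<epsilon>)" by simp
    also have "\<dots> \<le> real CARD('n) * (Kinv * norm x) * (\<xi> * \<epsilon>)"
      using y(2) \<xi>0 \<epsilon>0 by (intro mult_right_mono mult_left_mono) auto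
    also have "\<dots> = (real CARD('n) * Kinv * \<epsilon>) * (\<xi> * norm x)" by (simp add: algebra_simps)
    also have "\<dots> \<le> (1 / 2) * (\<xi> * norm x)" using s2 \<xi>0 by (intro mult_right_mono) auto
    finally show ?thesis by simp
  qed
  have "\<xi> \<le> \<xi> / 2" unfolding \<xi>_def by (rule norm_blinfun_bound) (use \<xi>0 Xx in \<open>auto simp: \<xi>_def\<close>)
  then have "X = 0" using \<xi>0 by (simp add: \<xi>_def)
  then have "K *\<^sub>R a = id_blinfun" by (simp add: X_def c_def)
  then have "(1 / K) *\<^sub>R (K *\<^sub>R a) = (1 / K) *\<^sub>R id_blinfun" by simp
  then show ?thesis using K2 by (simp add: K_def)
qed



lemma D1_Pa:
  assumes "k \<ge> 1"
  shows "D1 (P_a k :: real^'n \<Rightarrow> real^'n) = (1 / real k) *\<^sub>R id_blinfun"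
proof -
  have d: "((\<lambda>y::real^'n. (1 / real k) *\<^sub>R y) has_derivative (\<lambda>y. (1 / real k) *\<^sub>R y)) (at 0)"
    by (rule bounded_linear.has_derivative[OF bounded_linear_scaleR_right has_derivative_ident])
  show ?thesis unfolding D1_def P_a_eq[OF assms] frechet_derivative_at[OF d, symmetric]
    by (rule blinfun_eqI) (simp add: bounded_linear_Blinfun_apply bounded_linear_scaleR_right blinfun.scaleR_left)
qed

lemma germ_deriv_eq:
  assumes "(F has_derivative f) (at 0)" "(G has_derivative g) (at 0)" "\<forall>\<^sub>F x in nhds 0. F x = G x"
  shows "f = g"
proof -
  obtain d where d: "d > 0" "\<And>x. dist x 0 < d \<Longrightarrow> F x = G x"
    using assms(3) unfolding eventually_nhds_metric by auto
  have "(G has_derivative f) (at 0)"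
    using has_derivative_transform_within[of F f 0 UNIV d G] assms(1) d by auto
  then show ?thesis using has_derivative_unique assms(2) by blast
qed

lemma column_nz:
  assumes "invertible (B :: real^'n^'n)"
  shows "column i B \<noteq> 0"
proof
  assume c: "column i B = 0"
  obtain A' :: "real^'n^'n" where "A' ** B = mat 1" using assms unfolding invertible_def by blast
  then have "(A' ** B) $ i $ i = 1" by (simp add: mat_def)
  moreover have "(A' ** B) $ i $ i = 0"
  proof -
    have "\<And>j. B $ j $ i = 0" using c by (simp add: column_def vec_eq_iff)
    then show ?thesis by (simp add: matrix_matrix_mult_def)
  qed
  ultimately show False by simp
qed

lemma Kinv_ex:
  assumes "invertible (B :: real^'n^'n)"
  obtains Kinv where "Kinv > 0" "\<And>x. \<exists>y. x = B *v y \<and> norm y \<le> Kinv * norm x"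
proof -
  obtain A' :: "real^'n^'n" where A': "B ** A' = mat 1" using assms unfolding invertible_def by blast
  obtain K0 where K0: "K0 > 0" "\<And>x. norm (A' *v x) \<le> norm x * K0"
    using bounded_linear.pos_bounded[OF matrix_vector_mul_bounded_linear[of A']] by blast
  show ?thesis
  proof (rule that[OF K0(1)])
    fix x :: "real^'n"
    have "x = B *v (A' *v x)" by (simp add: matrix_vector_mul_assoc A')
    then show "\<exists>y. x = B *v y \<and> norm y \<le> K0 * norm x" using K0(2)[of x] by (auto simp: mult.commute)
  qed
qed

theorem lemma2p3:
  fixes B :: "real^'n^'n" and k :: nat
  assumes "k \<ge> 2" and "invertible B"
  shows "\<exists>\<epsilon>>0. \<forall>A Bs. local_action k A Bs \<and> dC2 A (P_a k) < \<epsilon> \<and>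
            (\<forall>i. dC2 (Bs i) (P_b B i) < \<epsilon>)
          \<longrightarrow> D1 A = (1 / real k) *\<^sub>R id_blinfun"
proof -
  define K where "K = real k"
  have K2: "K \<ge> 2" using assms(1) by (simp add: K_def)
  define W where "W i = (1/2) *\<^sub>R D2 (P_b B i)" for i
  have Wd: "W i y y = Q0 (column i B) y" for i y
    using pbf_D(2)[of "column i B" y] by (simp add: W_def P_b_eq blinfun.scaleR_left)
  have D1Pb: "D1 (P_b B i) = id_blinfun" for i by (simp add: P_b_eq pbf_D(1))
  have D1Pa: "D1 (P_a k :: real^'n \<Rightarrow> real^'n) = (1 / K) *\<^sub>R id_blinfun" using D1_Pa[of k] assms(1) by (simp add: K_def)
  define m0 where "m0 = Min (range (\<lambda>i. norm (column i B)))"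
  have m0le: "m0 \<le> norm (column i B)" for i unfolding m0_def by (rule Min_le) auto
  have m0pos: "m0 > 0"
  proof -
    have "m0 \<in> range (\<lambda>i. norm (column i B))" unfolding m0_def by (rule Min_in) auto
    then show ?thesis using column_nz[OF assms(2)] by auto
  qed
  define Wm where "Wm = (\<Sum>i\<in>UNIV. norm (W i))"
  have Wm: "norm (W i) \<le> Wm" for i unfolding Wm_def by (rule member_le_sum) auto
  have Wm0: "Wm \<ge> 0" unfolding Wm_def by (simp add: sum_nonneg)
  obtain Kinv where Kinv: "Kinv > 0" "\<And>x. \<exists>y. x = B *v y \<and> norm y \<le> Kinv * norm x"
    using Kinv_ex[OF assms(2)] by blast
  define ck where "ck = 4 * (1 + K + 2 * K^2 * 2^k)"
  have ck: "ck > 0" using K2 by (simp add: ck_def add_pos_nonneg)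
  define \<epsilon> where "\<epsilon> = min (min 1 (1 / ck)) (min (m0 / (2 * (1 + (Wm + 1) * K))) (1 / (2 * (real CARD('n) * Kinv + 1))))"
  have p1: "2 * (1 + (Wm + 1) * K) > 0" using Wm0 K2 by (simp add: add_pos_nonneg)
  have p2: "2 * (real CARD('n) * Kinv + 1) > 0" using Kinv by (simp add: add_pos_nonneg)
  have \<epsilon>pos: "\<epsilon> > 0" using ck p1 p2 m0pos by (simp add: \<epsilon>_def)
  have e1: "\<epsilon> \<le> 1" by (simp add: \<epsilon>_def)
  have e2: "\<epsilon> * ck \<le> 1"
  proof -
    have "\<epsilon> \<le> 1 / ck" by (simp add: \<epsilon>_def)
    then show ?thesis using ck by (simp add: field_simps)
  qed
  have s1: "\<epsilon> + (Wm + 1) * K * \<epsilon> \<le> m0 / 2"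
  proof -
    have "\<epsilon> \<le> m0 / (2 * (1 + (Wm + 1) * K))" by (simp add: \<epsilon>_def)
    then have "\<epsilon> * (2 * (1 + (Wm + 1) * K)) \<le> m0" using p1 by (simp add: field_simps)
    then show ?thesis by (simp add: algebra_simps)
  qed
  have s2: "real CARD('n) * Kinv * \<epsilon> \<le> 1 / 2"
  proof -
    have "\<epsilon> \<le> 1 / (2 * (real CARD('n) * Kinv + 1))" by (simp add: \<epsilon>_def)
    then have "\<epsilon> * (2 * (real CARD('n) * Kinv + 1)) \<le> 1" using p2 by (simp add: field_simps)
    then show ?thesis using \<epsilon>pos by (simp add: algebra_simps)
  qed
  show ?thesis
  proof (intro exI[of _ \<epsilon>] conjI allI impI)
    show "\<epsilon> > 0" by (rule \<epsilon>pos)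
    fix A :: "real^'n \<Rightarrow> real^'n" and Bs :: "'n \<Rightarrow> real^'n \<Rightarrow> real^'n"
    assume H: "local_action k A Bs \<and> dC2 A (P_a k) < \<epsilon> \<and> (\<forall>i. dC2 (Bs i) (P_b B i) < \<epsilon>)"
    have LA: "local_diffeo0 A" "\<And>i. local_diffeo0 (Bs i)"
      and germ: "\<And>i. \<forall>\<^sub>F x in nhds 0. A (Bs i x) = (Bs i ^^ k) (A x)"
      using H unfolding local_action_def germ_eq_def by (auto simp: comp_def)
    have dA: "norm (D1 A - (1 / K) *\<^sub>R id_blinfun) < \<epsilon>"
      using H unfolding dC2_def D1Pa by (smt (verit) norm_ge_zero)
    have dB1: "norm (D1 (Bs i) - id_blinfun) < \<epsilon>" for i
      using H unfolding dC2_def D1Pb by (smt (verit) norm_ge_zero)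
    have dB2: "norm (D2 (Bs i) - D2 (P_b B i)) < \<epsilon>" for i
      using H unfolding dC2_def by (smt (verit) norm_ge_zero)
    define a where "a = D1 A"
    define qA where "qA y = (1/2) *\<^sub>R blinfun_apply (blinfun_apply (D2 A) y) y" for y
    have A0: "A 0 = 0" and Ad: "(A has_derivative blinfun_apply a) (at 0)" and JA: "jet A (blinfun_apply a) qA"
      using diffeo_taylor[OF LA(1)] by (simp_all add: a_def qA_def[abs_def])
    define T where "T i = (1/2) *\<^sub>R D2 (Bs i)" for i
    have rel: "a (T i x x) = K *\<^sub>R T i (a x) (a x)" for i x
    proof -
      define b where "b = D1 (Bs i)"
      define qB where "qB y = (1/2) *\<^sub>R blinfun_apply (blinfun_apply (D2 (Bs i)) y) y" for y
      have B0: "Bs i 0 = 0" and Bd: "(Bs i has_derivative blinfun_apply b) (at 0)" and JB: "jet (Bs i) (blinfun_apply b) qB"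
        using diffeo_taylor[OF LA(2)[of i]] by (simp_all add: b_def qB_def[abs_def])
      have d1: "((\<lambda>x. A (Bs i x)) has_derivative (\<lambda>x. a (b x))) (at 0)"
        using has_derivative_compose[OF Bd, of A "blinfun_apply a"] Ad B0 by simp
      have d2: "((\<lambda>x. (Bs i ^^ k) (A x)) has_derivative (\<lambda>x. (blinfun_apply b ^^ k) (a x))) (at 0)"
        using has_derivative_compose[OF Ad, of "Bs i ^^ k" "blinfun_apply b ^^ k"] funpow_deriv[OF Bd B0, of k] A0 by simp
      have "(\<lambda>x. a (b x)) = (\<lambda>x. (blinfun_apply b ^^ k) (a x))" by (rule germ_deriv_eq[OF d1 d2 germ])
      then have relb: "\<And>x. a (b x) = (blinfun_apply b ^^ k) (a x)" by metis
      have bid: "b = id_blinfun"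
        by (rule lin_fix[OF assms(1) relb _ _ e1]) (use dA dB1[of i] e2 in \<open>simp_all add: a_def b_def K_def ck_def\<close>)
      have JB': "jet (Bs i) (\<lambda>x. x) qB" using JB by (simp add: bid)
      have QA: "quadf qA" unfolding qA_def by (rule quadf_D2)
      have QB: "quadf qB" unfolding qB_def by (rule quadf_D2)
      have bla: "bounded_linear (blinfun_apply a)" by (rule blinfun.bounded_linear_right)
      have J1: "jet (\<lambda>x. A (Bs i x)) (\<lambda>x. a x) (\<lambda>x. a (qB x) + qA x)"
        using jet_compose[OF JA JB' bla bounded_linear_ident QA QB] by simp
      have J2: "jet (\<lambda>x. (Bs i ^^ k) (A x)) (\<lambda>x. a x) (\<lambda>x. qA x + K *\<^sub>R qB (a x))"
        using jet_compose[OF jet_iter[OF JB' QB, of k] JA bounded_linear_ident bla quadf_scale[OF QB] QA]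
        by (simp add: K_def)
      have hA: "qA (t *\<^sub>R x) = t^2 *\<^sub>R qA x" for t x unfolding qA_def by (rule D2_hom)
      have hB: "qB (t *\<^sub>R x) = t^2 *\<^sub>R qB x" for t x unfolding qB_def by (rule D2_hom)
      have "a (qB x) + qA x = qA x + K *\<^sub>R qB (a x)"
      proof (rule conjunct2[OF jet_unique[OF J1 J2 germ[of i]]])
        show "linear (\<lambda>x. a x)" using bla bounded_linear.linear by blast
        then show "linear (\<lambda>x. a x)" .
        show "a (qB (t *\<^sub>R x)) + qA (t *\<^sub>R x) = t^2 *\<^sub>R (a (qB x) + qA x)" for t x
          by (simp add: hA hB blinfun.scaleR_right scaleR_add_right)
        show "qA (t *\<^sub>R x) + K *\<^sub>R qB (a (t *\<^sub>R x)) = t^2 *\<^sub>R (qA x + K *\<^sub>R qB (a x))" for t x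
          by (simp add: hA hB blinfun.scaleR_right scaleR_add_right)
      qed
      then show ?thesis by (simp add: T_def qB_def blinfun.scaleR_left blinfun.scaleR_right)
    qed
    have S: "norm (T i - W i) < \<epsilon> / 2" for i
    proof -
      have "T i - W i = (1/2) *\<^sub>R (D2 (Bs i) - D2 (P_b B i))" by (simp add: T_def W_def scaleR_diff_right)
      then show ?thesis using dB2[of i] by simp
    qed
    have relk: "\<And>i x. a (T i x x) = real k *\<^sub>R T i (a x) (a x)" using rel by (simp add: K_def)
    have dAk: "norm (a - (1 / real k) *\<^sub>R id_blinfun) < \<epsilon>" using dA by (simp add: a_def K_def)
    have s1k: "\<epsilon> + (Wm + 1) * real k * \<epsilon> \<le> m0 / 2" using s1 by (simp add: K_def)
    have "a = (1 / real k) *\<^sub>R id_blinfun"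
      by (rule final_alg[OF assms(1) relk Wd S dAk m0le m0pos Wm Kinv(2) e1 s1k s2 less_imp_le[OF Kinv(1)]])
    then show "D1 A = (1 / real k) *\<^sub>R id_blinfun" by (simp add: a_def)
  qed
qed


end
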